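(* Let $m\ge 0$ and let $n,k$ be integers with $0\le n,k<4\cdot 3^m$. Then $$\binom{n+4\cdot 3^m}{k}_F\equiv \begin{cases}\ \ \binom{n}{k}_F & \text{if } k \text{ is even},\\ -\binom{n}{k}_F & \text{if } k \text{ is odd},\end{cases}\pmod 3,$$ $$\binom{n+8\cdot 3^m}{k}_F\equiv \binom{n}{k}_F \pmod 3,$$ and $$\binom{n+8\cdot 3^m}{k+4\cdot 3^m}_F\equiv \begin{cases}-\binom{n}{k}_F & \text{if } n \text{ is even},\\ \ \ \binom{n}{k}_F & \text{if } n \text{ is odd},\end{cases}\pmod 3.$$
   Context: The Fibonacci numbers are defined by $F_0=0$, $F_1=1$, $F_n=F_{n-1}+F_{n-2}$ for $n\ge 2$. For $n\ge 0$ let $n!_F=F_1F_2\cdots F_n$ (with $0!_F=1$), and for $0\le k\le n$ define the Fibonomial coefficient $\binom{n}{k}_F=\dfrac{n!_F}{k!_F\,(n-k)!_F}$; by convention $\binom{n}{k}_F=0$ if $k<0$ or $k>n$. Note $\binom{n}{k}_F=\binom{n}{n-k}_F$. *)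

theory Defs
  imports Main "HOL-Number_Theory.Cong"
begin

fun fibo :: "nat \<Rightarrow> int" where
  "fibo 0 = 0"
| "fibo (Suc 0) = 1"
| "fibo (Suc (Suc n)) = fibo (Suc n) + fibo n"

definition fibfact :: "nat \<Rightarrow> int" where
  "fibfact n = (\<Prod>i=1..n. fibo i)"

text \<open>Fibonomial coefficient; the quotient is exact (it is a known integer), 0 outside 0 <= k <= n.\<close>
definition fibonomial :: "nat \<Rightarrow> nat \<Rightarrow> int" where
  "fibonomial n k = (if k \<le> n then fibfact n div (fibfact k * fibfact (n - k)) else 0)"

end

theory Submission imports Defs "HOL-Library.Numeral_Type" "HOL-Number_Theory.Fib" begin

lemma fibo_fib: "fibo n = int (fib n)"
  by (induction n rule: fib.induct) auto

fun C :: "nat \<Rightarrow> nat \<Rightarrow> int" where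
  "C n 0 = 1"
| "C 0 (Suc k) = 0"
| "C (Suc n) (Suc k) = fibo (n - k + 1) * C n k + fibo k * C n (Suc k)"

lemma C_zero: "n < k \<Longrightarrow> C n k = 0"
proof (induction n arbitrary: k)
  case 0 then show ?case by (cases k) auto
next
  case (Suc n) then show ?case by (cases k) auto
qed

lemma fibfact_Suc: "fibfact (Suc n) = fibfact n * fibo (Suc n)"
  unfolding fibfact_def by (simp add: prod.atLeast1_atMost_eq [symmetric]  mult.commute)

lemma fibfact_pos: "fibfact n > 0"
proof (induction n)
  case 0 then show ?case by (simp add: fibfact_def)
next
  case (Suc n)
  have "fib (Suc n) > 0" by (simp add: fib_neq_0_nat)
  then show ?case using Suc by (simp add: fibfact_Suc fibo_fib)
qed

lemma C_fact: "k \<le> n \<Longrightarrow> C n k * fibfact k * fibfact (n - k) = fibfact n"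
proof (induction n arbitrary: k)
  case 0 then show ?case by (simp add: fibfact_def)
next
  case (Suc n)
  show ?case
  proof (cases k)
    case 0 then show ?thesis by (simp add: fibfact_def)
  next
    case (Suc j)
    with Suc.prems have jn: "j \<le> n" by simp
    have e1: "C n j * fibfact j * fibfact (n - j) = fibfact n" using Suc.IH jn by simp
    have e2: "fibo j * C n (Suc j) * fibfact (Suc j) * fibfact (Suc n - Suc j) = fibo j * fibo (n - j) * fibfact n"
    proof (cases "j < n")
      case True
      have "C n (Suc j) * fibfact (Suc j) * fibfact (n - Suc j) = fibfact n" using Suc.IH True by simp
      moreover have "fibfact (n - j) = fibfact (n - Suc j) * fibo (n - j)"
        using True fibfact_Suc[of "n - Suc j"] by (simp add: Suc_diff_Suc)
      ultimately show ?thesis by (simp add: algebra_simps)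
    next
      case False then show ?thesis using jn by (simp add: C_zero)
    qed
    have fa: "fibo (Suc n) = fibo (Suc j) * fibo (n - j + 1) + fibo j * fibo (n - j)"
      using fib_add[of j "n - j"] jn by (simp add: fibo_fib)
    have "C (Suc n) k * fibfact k * fibfact (Suc n - k)
        = fibo (n - j + 1) * (C n j * fibfact j * fibfact (n - j)) * fibo (Suc j)
          + fibo j * C n (Suc j) * fibfact (Suc j) * fibfact (Suc n - Suc j)"
      using Suc jn by (simp add: fibfact_Suc algebra_simps)
    also have "\<dots> = fibfact n * fibo (Suc n)" using e1 e2 fa by (simp add: algebra_simps)
    finally show ?thesis by (simp add: fibfact_Suc)
  qed
qed

lemma fibonomial_C: "fibonomial n k = C n k"
proof (cases "k \<le> n")
  case True
  have "fibfact k * fibfact (n - k) \<noteq> 0" using fibfact_pos by (simp add: less_le)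
  then show ?thesis using C_fact[OF True] True unfolding fibonomial_def
    by (metis mult.assoc nonzero_mult_div_cancel_right)
next
  case False then show ?thesis by (simp add: fibonomial_def C_zero)
qed

definition c :: "nat \<Rightarrow> nat \<Rightarrow> 3" where "c n k = of_int (C n k)"
definition f :: "nat \<Rightarrow> 3" where "f j = of_int (fibo j)"

lemma c_rec: "c (Suc n) (Suc k) = f (n - k + 1) * c n k + f k * c n (Suc k)"
  by (simp add: c_def f_def)

lemma c_0 [simp]: "c n 0 = 1" by (simp add: c_def)

lemma c_zero: "n < k \<Longrightarrow> c n k = 0" by (simp add: c_def C_zero)

lemma three0: "(3::3) = 0"
  using of_nat_CHAR[where 'a=3] by simp

lemma two_m1: "(2::3) = -1"
proof -
  have "(2::3) + 1 = 0" using three0 by simp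
  then show ?thesis by (simp add: eq_neg_iff_add_eq_0)
qed

lemma f_4: "f (j + 4) = - f j"
proof -
  have "fibo (j + 4) = 3 * fibo (j + 1) + 2 * fibo j"
    by (simp add: eval_nat_numeral)
  then have "f (j + 4) = 3 * f (j + 1) + 2 * f j" by (simp add: f_def)
  then show ?thesis by (simp add: three0 two_m1)
qed

lemma f_3: "f 3 = -1" by (simp add: f_def eval_nat_numeral two_m1)

definition S :: "nat \<Rightarrow> bool" where
  "S N \<longleftrightarrow> (\<forall>n k. c (n + N) k = (-1)^k * c n k + (if N \<le> k then (-1)^(n+k) * c n (k - N) else 0))"

lemma c4: "c 4 1 = 0" "c 4 (Suc 0) = 0" "c 4 2 = 0" "c 4 3 = 0" "c 4 4 = 1"
  by (simp_all add: c_def eval_nat_numeral three0)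

lemma S4: "S 4"
  unfolding S_def
proof (intro allI)
  fix n k
  show "c (n + 4) k = (-1)^k * c n k + (if 4 \<le> k then (-1)^(n+k) * c n (k - 4) else 0)"
  proof (induction n arbitrary: k)
    case 0
    have "k = 0 \<or> k = 1 \<or> k = 2 \<or> k = 3 \<or> k = 4 \<or> k > 4" by auto
    then show ?case
    proof (elim disjE)
      assume "k > 4" then show ?thesis by (simp add: c_zero)
    qed (auto simp: c4 c_zero)
  next
    case (Suc n)
    show ?case
    proof (cases k)
      case 0 then show ?thesis by simp
    next
      case (Suc j)
      have IH1: "c (n + 4) j = (-1)^j * c n j + (if 4 \<le> j then (-1)^(n+j) * c n (j - 4) else 0)"
        using Suc.IH by blast
      have IH2: "c (n + 4) (Suc j) = (-1)^(Suc j) * c n (Suc j) + (if 4 \<le> Suc j then (-1)^(n+Suc j) * c n (Suc j - 4) else 0)"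
        using Suc.IH by blast
      have a: "f (n + 4 - j + 1) * c n j = - f (n - j + 1) * c n j"
      proof (cases "j \<le> n")
        case True
        then have idx: "n + 4 - j + 1 = (n - j + 1) + 4" by simp
        have "f (n + 4 - j + 1) = - f (n - j + 1)" by (subst idx) (rule f_4)
        then show ?thesis by simp
      qed (simp add: c_zero)
      have L: "c (Suc n + 4) k = f (n + 4 - j + 1) * c (n + 4) j + f j * c (n + 4) (Suc j)"
        using Suc c_rec[of "n + 4" j] by simp
      have R1: "c (Suc n) k = f (n - j + 1) * c n j + f j * c n (Suc j)"
        using Suc c_rec[of n j] by simp
      have RHS: "(-1::3)^k * c (Suc n) k + (if 4 \<le> k then (-1)^(Suc n + k) * c (Suc n) (k - 4) else 0)
          = - ((-1)^j * (f (n - j + 1) * c n j)) - (-1)^j * f j * c n (Suc j)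
            + (if 4 \<le> Suc j then (-1)^(n + j) * c (Suc n) (j - 3) else 0)"
        using R1 Suc by (simp add: algebra_simps)
      have LHS: "c (Suc n + 4) k = (-1)^j * (f (n + 4 - j + 1) * c n j) - (-1)^j * f j * c n (Suc j)
          + (if 4 \<le> j then (-1)^(n+j) * (f (n + 4 - j + 1) * c n (j - 4)) else 0)
          + (if 4 \<le> Suc j then - ((-1)^(n+j) * f j * c n (Suc j - 4)) else 0)"
        unfolding L IH1 IH2 by (simp add: algebra_simps)
      consider "j < 3" | "j = 3" | "4 \<le> j" by linarith
      then show ?thesis
      proof cases
        case 1
        then have h: "\<not> 4 \<le> j" "\<not> 4 \<le> Suc j" by auto
        show ?thesis unfolding RHS LHS a by (simp only: h if_False) (simp add: algebra_simps)
      next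
        case 2
        then show ?thesis unfolding RHS LHS a using f_3 by (simp add: algebra_simps)
      next
        case 3
        have b: "f (n + 4 - j + 1) * c n (j - 4) = f (n - (j - 4) + 1) * c n (j - 4)"
        proof (cases "j \<le> n + 4")
          case True
          then have idx: "n + 4 - j + 1 = n - (j - 4) + 1" using 3 by simp
          show ?thesis by (subst idx) (rule refl)
        qed (simp add: c_zero)
        have idx2: "j = (j - 4) + 4" using 3 by simp
        have cc: "f j = - f (j - 4)" by (subst idx2) (rule f_4)
        have idx3: "j - 3 = Suc (j - 4)" using 3 by simp
        have d: "c (Suc n) (j - 3) = f (n - (j - 4) + 1) * c n (j - 4) + f (j - 4) * c n (j - 3)"
          using 3 by (simp only: idx3 c_rec)
        have e: "Suc j - 4 = j - 3" using 3 by simp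
        have h: "4 \<le> j" "4 \<le> Suc j" using 3 by auto
        show ?thesis unfolding RHS LHS a b e d cc by (simp only: h if_True) (simp add: algebra_simps)
      qed
    qed
  qed
qed


lemma sq1 [simp]: "(-1::3)^x * (-1)^x = 1" "(-1::3)^x * ((-1)^x * y) = y"
  by (simp_all add: power_add[symmetric] mult.assoc[symmetric] power_mult_distrib[symmetric])

lemma S_step:
  assumes SN: "S N" and ev: "even N"
  shows "S (3 * N)"
proof -
  have sg: "(-1::3)^(x + N) = (-1)^x" "(-1::3)^(N + x) = (-1)^x" for x
    using ev by (auto simp: power_add elim!: evenE)
  have sg1: "(-1::3)^N = 1" "(-1::3)^(2*N) = 1" "(-1::3)^(3*N) = 1"
    using ev by (auto simp: power_mult elim!: evenE)
  have E: "c (n + N) k = (-1)^k * c n k + (if N \<le> k then (-1)^(n+k) * c n (k - N) else 0)" for n k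
    using SN unfolding S_def by blast
  have E2: "c (n + 2 * N) k = c n k + (if N \<le> k then 2 * (-1)^n * c n (k - N) else 0)
             + (if 2 * N \<le> k then c n (k - 2 * N) else 0)" for n k
  proof (cases "N \<le> k")
    case False
    have "c (n + 2 * N) k = c ((n + N) + N) k" by (rule arg_cong[where f="\<lambda>x. c x k"]) simp
    also have "\<dots> = c n k" unfolding E using False by simp
    finally show ?thesis using False by simp
  next
    case True
    then obtain j where j: "k = N + j" by (metis le_add_diff_inverse)
    have "c (n + 2 * N) k = c ((n + N) + N) k" by (rule arg_cong[where f="\<lambda>x. c x k"]) simp
    also have "\<dots> = (-1)^k * c (n + N) k + (-1)^(n + N + k) * c (n + N) j"
      unfolding E[of "n + N" k] using j by simp
    also have "\<dots> = c n k + 2 * (-1)^n * c n j + (if N \<le> j then c n (j - N) else 0)"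
      unfolding E[of n k] E[of n j] using j by (simp add: sg sg1 power_add algebra_simps)
    finally show ?thesis using j by simp
  qed
  show ?thesis unfolding S_def
  proof (intro allI)
    fix n k
    show "c (n + 3 * N) k = (-1)^k * c n k + (if 3 * N \<le> k then (-1)^(n+k) * c n (k - 3 * N) else 0)"
    proof (cases "N \<le> k")
      case False
      have "c (n + 3 * N) k = c ((n + 2 * N) + N) k" by (rule arg_cong[where f="\<lambda>x. c x k"]) simp
      also have "\<dots> = (-1)^k * c n k" unfolding E E2 using False by simp
      finally show ?thesis using False by simp
    next
      case True
      then obtain j where j: "k = N + j" by (metis le_add_diff_inverse)
      have "c (n + 3 * N) k = c ((n + 2 * N) + N) k" by (rule arg_cong[where f="\<lambda>x. c x k"]) simp
      also have "\<dots> = (-1)^k * c (n + 2 * N) k + (-1)^(n + k) * c (n + 2 * N) j"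
        unfolding E[of "n + 2 * N" k] using j by (simp add: sg sg1 power_add)
      also have "\<dots> = (-1)^k * c n k + 3 * (-1)^(n+k) * c n j
           + (if N \<le> j then 3 * (-1)^k * c n (j - N) else 0)
           + (if 2 * N \<le> j then (-1)^(n+k) * c n (j - 2 * N) else 0)"
        unfolding E2[of n k] E2[of n j] using j by (simp add: sg sg1 power_add algebra_simps)
      also have "\<dots> = (-1)^k * c n k + (if 2 * N \<le> j then (-1)^(n+k) * c n (j - 2 * N) else 0)"
        by (simp add: three0)
      finally show ?thesis using j by simp
    qed
  qed
qed

lemma S_all: "S (4 * 3 ^ m)"
proof (induction m)
  case 0 then show ?case using S4 by simp
next
  case (Suc m)
  have "S (3 * (4 * 3 ^ m))" by (rule S_step[OF Suc]) simp
  then show ?case by (simp add: algebra_simps)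
qed


lemma cong3: "[a = b] (mod 3) \<longleftrightarrow> (of_int a :: 3) = of_int b"
  by (simp add: of_int_eq_iff_cong_CHAR)

theorem mainTheorem5:
  fixes m n k :: nat
  assumes "n < 4 * 3 ^ m" and "k < 4 * 3 ^ m"
  shows "[fibonomial (n + 4 * 3 ^ m) k = (if even k then fibonomial n k else - fibonomial n k)] (mod 3) \<and>
    [fibonomial (n + 8 * 3 ^ m) k = fibonomial n k] (mod 3) \<and>
    [fibonomial (n + 8 * 3 ^ m) (k + 4 * 3 ^ m) = (if even n then - fibonomial n k else fibonomial n k)] (mod 3)"
proof -
  define N :: nat where "N = 4 * 3 ^ m"
  have nN: "n < N" and kN: "k < N" using assms by (simp_all add: N_def)
  have ev: "even N" by (simp add: N_def)
  have sg1: "(-1::3)^N = 1" using ev by (auto simp: power_mult elim!: evenE)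
  have E: "c (x + N) y = (-1)^y * c x y + (if N \<le> y then (-1)^(x+y) * c x (y - N) else 0)" for x y
    using S_all[of m] unfolding S_def N_def by blast
  have 8: "8 * 3 ^ m = 2 * N" by (simp add: N_def)
  have oi: "(of_int (fibonomial x y) :: 3) = c x y" for x y by (simp add: c_def fibonomial_C)
  have A: "c (n + N) k = (-1)^k * c n k" using E[of n k] kN by simp
  have B: "c (n + 2 * N) k = c n k"
  proof -
    have "c (n + 2 * N) k = c ((n + N) + N) k" by (rule arg_cong[where f="\<lambda>x. c x k"]) simp
    also have "\<dots> = c n k" using E[of "n + N" k] A kN by simp
    finally show ?thesis .
  qed
  have C: "c (n + 2 * N) (k + N) = - ((-1)^n * c n k)"
  proof -
    have z: "c n (k + N) = 0" using nN by (simp add: c_zero)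
    have "c (n + 2 * N) (k + N) = c ((n + N) + N) (k + N)" by (rule arg_cong[where f="\<lambda>x. c x (k + N)"]) simp
    also have "\<dots> = (-1)^k * c (n + N) (k + N) + (-1)^(n + k) * c (n + N) k"
      using E[of "n + N" "k + N"] by (simp add: power_add sg1)
    also have "\<dots> = 2 * ((-1)^n * c n k)"
      using E[of n "k + N"] A z by (simp add: power_add sg1 algebra_simps)
    finally show ?thesis by (simp add: two_m1)
  qed
  show ?thesis
    unfolding cong3 oi 8 N_def[symmetric] using A B C
    by (auto simp: minus_one_power_iff oi)
qed

end
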